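(* There exists an abelian sp-group $G$ whose $p$-components $T_p$ are all finite and such that $G/T$ has torsion-free rank $1$ (hence $G/T$ is strongly co-Hopfian), but neither the torsion subgroup $T$ nor $G$ is strongly co-Hopfian.
   Context: All groups are abelian. $T$ is the torsion subgroup of $G$ and $T_p$ its $p$-primary component. A mixed group $G$ with infinitely many non-zero $T_p$ is an sp-group if it is a pure subgroup of $\prod_p T_p$ containing $\bigoplus_p T_p$. A group is strongly co-Hopfian if for every endomorphism $f$ there is $n\in\mathbb N$ with $f^n(G)=f^{n+1}(G)$. *)

theory Defs
  imports "HOL-Algebra.Algebra" "HOL-Computational_Algebra.Primes"
begin

abbreviation nat_prime :: "nat \<Rightarrow> bool" where
  "nat_prime p \<equiv> Factorial_Ring.prime p"

text \<open>Abelian groups are written multiplicatively (HOL-Algebra).\<close>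

definition torsion_part :: "('a, 'b) monoid_scheme \<Rightarrow> 'a set" where
  "torsion_part G = {x \<in> carrier G. \<exists>n::nat. n > 0 \<and> x [^]\<^bsub>G\<^esub> n = \<one>\<^bsub>G\<^esub>}"

definition p_component :: "('a, 'b) monoid_scheme \<Rightarrow> nat \<Rightarrow> 'a set" where
  "p_component G p = {x \<in> carrier G. \<exists>k::nat. x [^]\<^bsub>G\<^esub> (p ^ k) = \<one>\<^bsub>G\<^esub>}"

definition pure_subgroup :: "'a set \<Rightarrow> ('a, 'b) monoid_scheme \<Rightarrow> bool" where
  "pure_subgroup H A \<longleftrightarrow> subgroup H A \<and>
     (\<forall>n::nat. n > 0 \<longrightarrow> (\<forall>x\<in>H. (\<exists>y\<in>carrier A. y [^]\<^bsub>A\<^esub> n = x) \<longrightarrow> (\<exists>y\<in>H. y [^]\<^bsub>A\<^esub> n = x)))"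

definition prod_components :: "('a, 'b) monoid_scheme \<Rightarrow> (nat \<Rightarrow> 'a) monoid" where
  "prod_components G = product_group {p. nat_prime p} (\<lambda>p. subgroup_generated G (p_component G p))"

definition sum_components :: "('a, 'b) monoid_scheme \<Rightarrow> (nat \<Rightarrow> 'a) monoid" where
  "sum_components G = sum_group {p. nat_prime p} (\<lambda>p. subgroup_generated G (p_component G p))"

text \<open>sp-group: mixed abelian group with infinitely many non-zero T_p, which (via an embedding
  that is the canonical inclusion on each T_p) is a pure subgroup of the product of the T_p
  containing their direct sum.\<close>
definition sp_group :: "('a, 'b) monoid_scheme \<Rightarrow> bool" where
  "sp_group G \<longleftrightarrow> comm_group G \<and>
     infinite {p::nat. nat_prime p \<and> p_component G p \<noteq> {\<one>\<^bsub>G\<^esub>}} \<and>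
     (\<exists>\<phi>. \<phi> \<in> hom G (prod_components G) \<and> inj_on \<phi> (carrier G) \<and>
        (\<forall>p x. nat_prime p \<and> x \<in> p_component G p \<longrightarrow>
            \<phi> x = (\<lambda>q\<in>{q. nat_prime q}. if q = p then x else \<one>\<^bsub>G\<^esub>)) \<and>
        pure_subgroup (\<phi> ` carrier G) (prod_components G) \<and>
        carrier (sum_components G) \<subseteq> \<phi> ` carrier G)"

definition strongly_co_hopfian :: "('a, 'b) monoid_scheme \<Rightarrow> bool" where
  "strongly_co_hopfian A \<longleftrightarrow>
     (\<forall>f \<in> hom A A. \<exists>n::nat. (f ^^ n) ` carrier A = (f ^^ (Suc n)) ` carrier A)"

definition infinite_order_elems :: "('a, 'b) monoid_scheme \<Rightarrow> 'a set" where
  "infinite_order_elems A = {x \<in> carrier A. \<forall>n::nat. n > 0 \<longrightarrow> x [^]\<^bsub>A\<^esub> n \<noteq> \<one>\<^bsub>A\<^esub>}"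

definition independent_set :: "('a, 'b) monoid_scheme \<Rightarrow> 'a set \<Rightarrow> bool" where
  "independent_set A S \<longleftrightarrow> S \<subseteq> carrier A \<and>
     (\<forall>F (c :: 'a \<Rightarrow> int). finite F \<and> F \<subseteq> S \<and>
        finprod A (\<lambda>x. x [^]\<^bsub>A\<^esub> c x) F = \<one>\<^bsub>A\<^esub> \<longrightarrow>
        (\<forall>x\<in>F. x [^]\<^bsub>A\<^esub> c x = \<one>\<^bsub>A\<^esub>))"

text \<open>A has torsion-free rank r: there is a maximal independent system of elements of
  infinite order of cardinality r (the cardinality is independent of the choice).\<close>
definition has_tf_rank :: "('a, 'b) monoid_scheme \<Rightarrow> nat \<Rightarrow> bool" where
  "has_tf_rank A r \<longleftrightarrow> (\<exists>S. S \<subseteq> infinite_order_elems A \<and> independent_set A S \<and>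
     (\<forall>S'. S \<subseteq> S' \<and> S' \<subseteq> infinite_order_elems A \<and> independent_set A S' \<longrightarrow> S' = S) \<and>
     finite S \<and> card S = r)"

end

theory Submission
  imports Defs "HOL-Number_Theory.Cong"
begin


definition KK :: "nat \<Rightarrow> nat" where "KK q = (if nat_prime q then q ^ q else 1)"
definition nrm :: "(nat \<Rightarrow> int) \<Rightarrow> nat \<Rightarrow> nat" where
  "nrm f = (\<lambda>q. nat (f q mod int (KK q)))"
definition ee :: "nat \<Rightarrow> nat" where "ee q = (if nat_prime q then q ^ (q - 1) else 0)"
definition Bc :: "(nat \<Rightarrow> nat) set" where "Bc = {x. \<forall>q. x q < KK q}"
definition good :: "(nat \<Rightarrow> nat) \<Rightarrow> bool" where
  "good x \<longleftrightarrow> (\<exists>n::nat. n > 0 \<and> (\<exists>m::int. \<exists>N. \<forall>q\<ge>N.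
      [int n * int (x q) = m * int (ee q)] (mod int (KK q))))"
definition GG :: "(nat \<Rightarrow> nat) monoid" where
  "GG = \<lparr>carrier = {x \<in> Bc. good x}, monoid.mult = (\<lambda>x y. nrm (\<lambda>q. int (x q) + int (y q))), one = (\<lambda>q. 0)\<rparr>"

lemma KK_pos: "KK q > 0"
  by (simp add: KK_def prime_gt_0_nat)

lemma nrm_lt: "nrm f q < KK q"
  using KK_pos[of q] unfolding nrm_def
  by (simp add: nat_less_iff)

lemma nrm_Bc: "nrm f \<in> Bc"
  by (simp add: Bc_def nrm_lt)

lemma int_nrm: "int (nrm f q) = f q mod int (KK q)"
  using KK_pos[of q] unfolding nrm_def by simp

lemma nrm_eq_iff: "nrm f = nrm g \<longleftrightarrow> (\<forall>q. f q mod int (KK q) = g q mod int (KK q))"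
proof
  assume "nrm f = nrm g"
  then show "\<forall>q. f q mod int (KK q) = g q mod int (KK q)"
    by (metis int_nrm)
next
  assume "\<forall>q. f q mod int (KK q) = g q mod int (KK q)"
  then show "nrm f = nrm g" unfolding nrm_def by auto
qed

lemma nrm_id: "x \<in> Bc \<Longrightarrow> nrm (\<lambda>q. int (x q)) = x"
  unfolding nrm_def Bc_def by (auto intro!: ext)

lemma Bc_mod: "x \<in> Bc \<Longrightarrow> int (x q) mod int (KK q) = int (x q)"
  unfolding Bc_def by simp

lemma carrier_GG: "carrier GG = {x \<in> Bc. good x}" by (simp add: GG_def)
lemma mult_GG: "x \<otimes>\<^bsub>GG\<^esub> y = nrm (\<lambda>q. int (x q) + int (y q))" by (simp add: GG_def)
lemma one_GG: "\<one>\<^bsub>GG\<^esub> = (\<lambda>q. 0)" by (simp add: GG_def)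


lemma cong_nrm: "[int (nrm f q) = f q] (mod int (KK q))"
  by (simp add: cong_def int_nrm)

lemma nrm_eq_iff': "nrm f = nrm g \<longleftrightarrow> (\<forall>q. [f q = g q] (mod int (KK q)))"
  by (simp add: nrm_eq_iff cong_def)

lemma nrm_zero: "nrm (\<lambda>q. 0) = (\<lambda>q. 0)"
  by (simp add: nrm_def)

lemma nrm_eq_0: "nrm f = (\<lambda>q. 0) \<longleftrightarrow> (\<forall>q. f q mod int (KK q) = 0)"
  using nrm_eq_iff[of f "\<lambda>q. 0"] by (simp add: nrm_zero)

lemma good_mult:
  assumes "good x" "good y"
  shows "good (nrm (\<lambda>q. int (x q) + int (y q)))"
proof -
  obtain n1 m1 N1 where 1: "n1 > 0" "\<And>q. q \<ge> N1 \<Longrightarrow> [int n1 * int (x q) = m1 * int (ee q)] (mod int (KK q))"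
    using assms(1) unfolding good_def by blast
  obtain n2 m2 N2 where 2: "n2 > 0" "\<And>q. q \<ge> N2 \<Longrightarrow> [int n2 * int (y q) = m2 * int (ee q)] (mod int (KK q))"
    using assms(2) unfolding good_def by blast
  have "[int (n1 * n2) * int (nrm (\<lambda>q. int (x q) + int (y q)) q) = (int n2 * m1 + int n1 * m2) * int (ee q)] (mod int (KK q))"
    if "q \<ge> max N1 N2" for q
  proof -
    have a: "[int (n1 * n2) * int (nrm (\<lambda>q. int (x q) + int (y q)) q) = int (n1 * n2) * (int (x q) + int (y q))] (mod int (KK q))"
      by (rule cong_scalar_left) (rule cong_nrm)
    have b: "int (n1 * n2) * (int (x q) + int (y q)) = int n2 * (int n1 * int (x q)) + int n1 * (int n2 * int (y q))"
      by (simp add: algebra_simps)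
    have c1: "[int n2 * (int n1 * int (x q)) = int n2 * (m1 * int (ee q))] (mod int (KK q))"
      by (rule cong_scalar_left) (rule 1(2), use that in simp)
    have c2: "[int n1 * (int n2 * int (y q)) = int n1 * (m2 * int (ee q))] (mod int (KK q))"
      by (rule cong_scalar_left) (rule 2(2), use that in simp)
    have d: "int n2 * (m1 * int (ee q)) + int n1 * (m2 * int (ee q)) = (int n2 * m1 + int n1 * m2) * int (ee q)"
      by (simp add: algebra_simps)
    show ?thesis using cong_trans[OF a[unfolded b] cong_add[OF c1 c2]] unfolding d .
  qed
  moreover have "n1 * n2 > 0" using 1 2 by simp
  ultimately show ?thesis unfolding good_def by blast
qed

lemma good_inv:
  assumes "good x"
  shows "good (nrm (\<lambda>q. - int (x q)))"
proof -
  obtain n1 m1 N1 where 1: "n1 > 0" "\<And>q. q \<ge> N1 \<Longrightarrow> [int n1 * int (x q) = m1 * int (ee q)] (mod int (KK q))"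
    using assms(1) unfolding good_def by blast
  have "[int n1 * int (nrm (\<lambda>q. - int (x q)) q) = (- m1) * int (ee q)] (mod int (KK q))"
    if "q \<ge> N1" for q
  proof -
    have a: "[int n1 * int (nrm (\<lambda>q. - int (x q)) q) = int n1 * (- int (x q))] (mod int (KK q))"
      by (rule cong_scalar_left) (rule cong_nrm)
    have b: "[- (int n1 * int (x q)) = - (m1 * int (ee q))] (mod int (KK q))"
      using 1(2)[of q] that by (simp only: cong_minus_minus_iff)
    show ?thesis using cong_trans[OF a] b by simp
  qed
  then show ?thesis unfolding good_def using 1(1) by blast
qed

lemma good_zero: "good (\<lambda>q. 0)"
  unfolding good_def by (rule exI[of _ 1]) (auto intro: exI[of _ 0])

lemma zero_Bc: "(\<lambda>q. 0) \<in> Bc" by (simp add: Bc_def KK_pos)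

lemma comm_group_GG: "comm_group GG"
proof (rule comm_groupI)
  fix x y z assume x: "x \<in> carrier GG" and y: "y \<in> carrier GG" and z: "z \<in> carrier GG"
  show "x \<otimes>\<^bsub>GG\<^esub> y \<in> carrier GG"
    using x y by (simp add: carrier_GG mult_GG nrm_Bc good_mult)
  show "x \<otimes>\<^bsub>GG\<^esub> y \<otimes>\<^bsub>GG\<^esub> z = x \<otimes>\<^bsub>GG\<^esub> (y \<otimes>\<^bsub>GG\<^esub> z)"
    unfolding mult_GG nrm_eq_iff int_nrm by (simp add: mod_add_left_eq mod_add_right_eq add.assoc)
  show "x \<otimes>\<^bsub>GG\<^esub> y = y \<otimes>\<^bsub>GG\<^esub> x"
    unfolding mult_GG by (simp add: add.commute)
next
  show "\<one>\<^bsub>GG\<^esub> \<in> carrier GG" by (simp add: carrier_GG one_GG zero_Bc good_zero)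
next
  fix x assume x: "x \<in> carrier GG"
  show "\<one>\<^bsub>GG\<^esub> \<otimes>\<^bsub>GG\<^esub> x = x"
    using x by (simp add: carrier_GG one_GG mult_GG nrm_id)
  show "\<exists>y\<in>carrier GG. y \<otimes>\<^bsub>GG\<^esub> x = \<one>\<^bsub>GG\<^esub>"
  proof (intro bexI)
    show "nrm (\<lambda>q. - int (x q)) \<in> carrier GG"
      using x by (simp add: carrier_GG nrm_Bc good_inv)
    show "nrm (\<lambda>q. - int (x q)) \<otimes>\<^bsub>GG\<^esub> x = \<one>\<^bsub>GG\<^esub>"
      unfolding mult_GG one_GG nrm_eq_0 int_nrm by (simp add: mod_add_left_eq)
  qed
qed

interpretation G: comm_group GG by (rule comm_group_GG)

lemma inv_GG: "x \<in> carrier GG \<Longrightarrow> inv\<^bsub>GG\<^esub> x = nrm (\<lambda>q. - int (x q))"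
proof (rule G.inv_equality)
  assume x: "x \<in> carrier GG"
  show "nrm (\<lambda>q. - int (x q)) \<otimes>\<^bsub>GG\<^esub> x = \<one>\<^bsub>GG\<^esub>"
    unfolding mult_GG one_GG nrm_eq_0 int_nrm by (simp add: mod_add_left_eq)
  show "nrm (\<lambda>q. - int (x q)) \<in> carrier GG"
    using x by (simp add: carrier_GG nrm_Bc good_inv)
qed

lemma pow_GG: "x \<in> Bc \<Longrightarrow> x [^]\<^bsub>GG\<^esub> (n::nat) = nrm (\<lambda>q. int n * int (x q))"
proof (induction n)
  case 0 then show ?case by (simp add: one_GG nrm_zero)
next
  case (Suc n)
  have "x [^]\<^bsub>GG\<^esub> Suc n = nrm (\<lambda>q. int (nrm (\<lambda>q. int n * int (x q)) q) + int (x q))"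
    using Suc by (simp add: mult_GG)
  also have "\<dots> = nrm (\<lambda>q. int (Suc n) * int (x q))"
    unfolding nrm_eq_iff int_nrm mod_add_left_eq by (simp add: distrib_right add.commute)
  finally show ?case .
qed

lemma int_pow_GG: "x \<in> carrier GG \<Longrightarrow> x [^]\<^bsub>GG\<^esub> (m::int) = nrm (\<lambda>q. m * int (x q))"
proof (cases "m < 0")
  case True
  assume x: "x \<in> carrier GG"
  then have xb: "x \<in> Bc" by (simp add: carrier_GG)
  have "x [^]\<^bsub>GG\<^esub> m = inv\<^bsub>GG\<^esub> (x [^]\<^bsub>GG\<^esub> (nat (-m)))" 
  proof -
    have "x [^]\<^bsub>GG\<^esub> (nat (-m)) = x [^]\<^bsub>GG\<^esub> (-m)" using pow_nat[of "-m"] True by simp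
    then show ?thesis using G.int_pow_neg[OF x, of "-m"] by simp
  qed
  also have "\<dots> = nrm (\<lambda>q. - int ((x [^]\<^bsub>GG\<^esub> (nat (-m))) q))"
    by (rule inv_GG) (use x in simp)
  also have "\<dots> = nrm (\<lambda>q. m * int (x q))"
  proof -
    have "int (nat (-m)) = - m" using True by simp
    then show ?thesis unfolding pow_GG[OF xb] nrm_eq_iff int_nrm mod_minus_eq by simp
  qed
  finally show ?thesis .
next
  case False
  assume x: "x \<in> carrier GG"
  then have xb: "x \<in> Bc" by (simp add: carrier_GG)
  have "x [^]\<^bsub>GG\<^esub> m = x [^]\<^bsub>GG\<^esub> (nat m)" using pow_nat[of m] False by simp
  also have "\<dots> = nrm (\<lambda>q. int (nat m) * int (x q))" by (rule pow_GG[OF xb])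
  finally show ?thesis using False by simp
qed


lemma cancel_KK:
  assumes "\<not> (nat_prime q \<and> q dvd k)" "[int k * a = int k * b] (mod int (KK q))"
  shows "[a = b] (mod int (KK q))"
proof (cases "nat_prime q")
  case False
  then show ?thesis by (simp add: KK_def)
next
  case True
  then have "\<not> q dvd k" using assms(1) by simp
  then have "coprime q k" using True by (simp add: prime_imp_coprime)
  then have "coprime k (q ^ q)" by (simp add: coprime_commute)
  then have "coprime (int k) (int (KK q))" using True by (simp add: KK_def)
  then show ?thesis using assms(2) by (simp add: cong_mult_lcancel)
qed

lemma Bc_cong0: "x \<in> Bc \<Longrightarrow> [int (x q) = 0] (mod int (KK q)) \<Longrightarrow> x q = 0"
  unfolding Bc_def cong_def by auto

definition TT :: "(nat \<Rightarrow> nat) set" where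
  "TT = {x \<in> carrier GG. \<exists>N. \<forall>q\<ge>N. x q = 0}"

lemma KK_dvd_prod: "q < N \<Longrightarrow> KK q dvd (\<Prod>r<N. KK r)"
  by (rule dvd_prodI) auto

lemma torsion_TT: "torsion_part GG = TT"
proof
  show "torsion_part GG \<subseteq> TT"
  proof
    fix x assume "x \<in> torsion_part GG"
    then obtain n :: nat where x: "x \<in> carrier GG" "n > 0" "x [^]\<^bsub>GG\<^esub> n = \<one>\<^bsub>GG\<^esub>"
      unfolding torsion_part_def by auto
    then have xb: "x \<in> Bc" by (simp add: carrier_GG)
    have "nrm (\<lambda>q. int n * int (x q)) = nrm (\<lambda>q. 0)" using x(3) by (simp add: pow_GG[OF xb] one_GG nrm_zero)
    then have c: "[int n * int (x q) = int n * 0] (mod int (KK q))" for q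
      unfolding nrm_eq_iff' by simp
    have "x q = 0" if "q \<ge> Suc n" for q
    proof -
      have "\<not> q dvd n" using that x(2) by (auto dest: dvd_imp_le)
      then show ?thesis using cancel_KK[OF _ c[of q]] Bc_cong0[OF xb] by blast
    qed
    then show "x \<in> TT" unfolding TT_def using x(1) by blast
  qed
next
  show "TT \<subseteq> torsion_part GG"
  proof
    fix x assume "x \<in> TT"
    then obtain N where x: "x \<in> carrier GG" "\<And>q. q \<ge> N \<Longrightarrow> x q = 0"
      unfolding TT_def by auto
    then have xb: "x \<in> Bc" by (simp add: carrier_GG)
    define n where "n = (\<Prod>r<N. KK r)"
    have n0: "n > 0" unfolding n_def using KK_pos by (simp add: prod_pos)
    have "int n * int (x q) mod int (KK q) = 0" for q
    proof (cases "q < N")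
      case True
      then have "int (KK q) dvd int n" unfolding n_def using KK_dvd_prod by (simp only: int_dvd_int_iff)
      then show ?thesis by simp
    next
      case False then show ?thesis using x(2)[of q] by simp
    qed
    then have "x [^]\<^bsub>GG\<^esub> n = \<one>\<^bsub>GG\<^esub>" by (simp add: pow_GG[OF xb] one_GG nrm_eq_0)
    then show "x \<in> torsion_part GG" unfolding torsion_part_def using x(1) n0 by blast
  qed
qed


lemma one_TT: "(\<lambda>q. 0) \<in> TT"
  unfolding TT_def by (simp add: carrier_GG zero_Bc good_zero)

lemma subgroup_TT: "subgroup TT GG"
proof (rule G.subgroupI)
  show "TT \<subseteq> carrier GG" unfolding TT_def by auto
  show "TT \<noteq> {}" using one_TT by auto
next
  fix a assume a: "a \<in> TT"
  then obtain N where N: "a \<in> carrier GG" "\<And>q. q \<ge> N \<Longrightarrow> a q = 0" unfolding TT_def by auto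
  have "\<forall>q\<ge>N. nrm (\<lambda>q. - int (a q)) q = 0" using N(2) by (simp add: nrm_def)
  then show "inv\<^bsub>GG\<^esub> a \<in> TT" unfolding TT_def using N(1) G.inv_closed[OF N(1)] by (auto simp: inv_GG)
next
  fix a b assume a: "a \<in> TT" and b: "b \<in> TT"
  then obtain N M where N: "a \<in> carrier GG" "\<And>q. q \<ge> N \<Longrightarrow> a q = 0"
     and M: "b \<in> carrier GG" "\<And>q. q \<ge> M \<Longrightarrow> b q = 0" unfolding TT_def by auto
  have "\<forall>q\<ge>max N M. nrm (\<lambda>q. int (a q) + int (b q)) q = 0" using N(2) M(2) by (simp add: nrm_def)
  then have "\<forall>q\<ge>max N M. (a \<otimes>\<^bsub>GG\<^esub> b) q = 0" by (simp add: mult_GG)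
  then show "a \<otimes>\<^bsub>GG\<^esub> b \<in> TT" unfolding TT_def using N(1) M(1) G.m_closed[OF N(1) M(1)] by blast
qed

definition Pc :: "nat \<Rightarrow> (nat \<Rightarrow> nat) set" where
  "Pc p = {x \<in> Bc. \<forall>q. q \<noteq> p \<longrightarrow> x q = 0}"

lemma Pc_carrier: "x \<in> Pc p \<Longrightarrow> x \<in> carrier GG"
  unfolding Pc_def carrier_GG good_def
  by (auto intro!: exI[of _ 1] exI[of _ 0] exI[of _ "Suc p"])

lemma Pc_TT: "Pc p \<subseteq> TT"
  unfolding TT_def using Pc_carrier by (auto simp: Pc_def intro!: exI[of _ "Suc p"])

lemma pcomp: assumes p: "nat_prime p" shows "p_component GG p = Pc p"
proof
  show "p_component GG p \<subseteq> Pc p"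
  proof
    fix x assume "x \<in> p_component GG p"
    then obtain k :: nat where x: "x \<in> carrier GG" "x [^]\<^bsub>GG\<^esub> (p ^ k) = \<one>\<^bsub>GG\<^esub>"
      unfolding p_component_def by auto
    then have xb: "x \<in> Bc" by (simp add: carrier_GG)
    have "nrm (\<lambda>q. int (p ^ k) * int (x q)) = nrm (\<lambda>q. 0)" using x(2) by (simp add: pow_GG[OF xb] one_GG nrm_zero)
    then have c: "[int (p ^ k) * int (x q) = int (p ^ k) * 0] (mod int (KK q))" for q
      unfolding nrm_eq_iff' by simp
    have "x q = 0" if "q \<noteq> p" for q
    proof -
      have "\<not> (nat_prime q \<and> q dvd p ^ k)"
        using that p prime_dvd_power primes_dvd_imp_eq by blast
      then show ?thesis using cancel_KK[OF _ c[of q]] Bc_cong0[OF xb] by blast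
    qed
    then show "x \<in> Pc p" unfolding Pc_def using xb by blast
  qed
next
  show "Pc p \<subseteq> p_component GG p"
  proof
    fix x assume xp: "x \<in> Pc p"
    then have x: "x \<in> carrier GG" by (rule Pc_carrier)
    then have xb: "x \<in> Bc" by (simp add: carrier_GG)
    have "int (p ^ p) * int (x q) mod int (KK q) = 0" for q
    proof (cases "q = p")
      case True
      then show ?thesis using p by (simp add: KK_def)
    next
      case False then show ?thesis using xp by (simp add: Pc_def)
    qed
    then have "x [^]\<^bsub>GG\<^esub> (p ^ p) = \<one>\<^bsub>GG\<^esub>" by (simp add: pow_GG[OF xb] one_GG nrm_eq_0)
    then show "x \<in> p_component GG p" unfolding p_component_def using x by blast
  qed
qed

lemma subgroup_Pc: "subgroup (Pc p) GG"
proof (rule G.subgroupI)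
  show "Pc p \<subseteq> carrier GG" using Pc_carrier by auto
  show "Pc p \<noteq> {}" using zero_Bc unfolding Pc_def by auto
next
  fix a assume a: "a \<in> Pc p"
  have "nrm (\<lambda>q. - int (a q)) \<in> Bc" by (rule nrm_Bc)
  moreover have "\<forall>q. q \<noteq> p \<longrightarrow> nrm (\<lambda>q. - int (a q)) q = 0" using a by (simp add: Pc_def nrm_def)
  ultimately show "inv\<^bsub>GG\<^esub> a \<in> Pc p" using inv_GG[OF Pc_carrier[OF a]] by (simp add: Pc_def)
next
  fix a b assume a: "a \<in> Pc p" and b: "b \<in> Pc p"
  have "nrm (\<lambda>q. int (a q) + int (b q)) \<in> Bc" by (rule nrm_Bc)
  moreover have "\<forall>q. q \<noteq> p \<longrightarrow> nrm (\<lambda>q. int (a q) + int (b q)) q = 0" using a b by (simp add: Pc_def nrm_def)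
  ultimately show "a \<otimes>\<^bsub>GG\<^esub> b \<in> Pc p" by (simp add: Pc_def mult_GG)
qed

definition single :: "nat \<Rightarrow> nat \<Rightarrow> nat \<Rightarrow> nat" where
  "single p a = (\<lambda>q. if q = p then a else 0)"

lemma finite_Pc: "finite (Pc p)"
proof -
  have "Pc p \<subseteq> single p ` {..<KK p}"
  proof
    fix x assume "x \<in> Pc p"
    then have "x = single p (x p)" "x p < KK p" unfolding Pc_def single_def Bc_def by auto
    then show "x \<in> single p ` {..<KK p}" by blast
  qed
  then show ?thesis by (rule finite_subset) simp
qed

lemma p_pow_gt1: "nat_prime p \<Longrightarrow> Suc 0 < p ^ p"
  by (metis One_nat_def one_less_power prime_gt_1_nat prime_gt_0_nat)

lemma single_Pc: "nat_prime p \<Longrightarrow> single p 1 \<in> Pc p"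
  using p_pow_gt1[of p] unfolding Pc_def Bc_def single_def KK_def
  by (auto simp: prime_gt_1_nat prime_gt_0_nat one_less_power)

lemma Pc_nontriv: "nat_prime p \<Longrightarrow> Pc p \<noteq> {\<one>\<^bsub>GG\<^esub>}"
proof
  assume p: "nat_prime p" and e: "Pc p = {\<one>\<^bsub>GG\<^esub>}"
  have "single p 1 = (\<lambda>q. 0)" using single_Pc[OF p] e by (simp add: one_GG)
  then have "single p 1 p = 0" by simp
  then show False by (simp add: single_def)
qed


abbreviation PR where "PR \<equiv> prod_components GG"

lemma carrier_SGp: "nat_prime p \<Longrightarrow> carrier (subgroup_generated GG (p_component GG p)) = Pc p"
  by (simp add: pcomp subgroup.carrier_subgroup_generated_subgroup[OF subgroup_Pc])

lemma carrier_PR: "carrier PR = (\<Pi>\<^sub>E p\<in>{p. nat_prime p}. Pc p)"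
  unfolding prod_components_def carrier_product_group using carrier_SGp by (intro PiE_cong) auto

lemma mult_PR: "x \<otimes>\<^bsub>PR\<^esub> y = (\<lambda>p\<in>{p. nat_prime p}. x p \<otimes>\<^bsub>GG\<^esub> y p)"
  unfolding prod_components_def by simp

lemma group_PR: "group PR"
  unfolding prod_components_def by (rule product_group) simp

lemma pow_PR: "nat_prime p \<Longrightarrow> (y [^]\<^bsub>PR\<^esub> (n::nat)) p = y p [^]\<^bsub>GG\<^esub> n"
proof (induction n)
  case 0 then show ?case unfolding prod_components_def by simp
next
  case (Suc n) then show ?case by (simp add: mult_PR)
qed

definition phi :: "(nat \<Rightarrow> nat) \<Rightarrow> nat \<Rightarrow> nat \<Rightarrow> nat" where
  "phi x = (\<lambda>p\<in>{p. nat_prime p}. single p (x p))"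

definition psi :: "(nat \<Rightarrow> nat \<Rightarrow> nat) \<Rightarrow> nat \<Rightarrow> nat" where
  "psi y = (\<lambda>q. if nat_prime q then y q q else 0)"

lemma single_in_Pc: "x \<in> Bc \<Longrightarrow> single p (x p) \<in> Pc p"
  unfolding Pc_def Bc_def single_def using KK_pos by auto

lemma phi_carrier: "x \<in> Bc \<Longrightarrow> phi x \<in> carrier PR"
  unfolding carrier_PR phi_def using single_in_Pc by auto

lemma Bc_nonprime: "x \<in> Bc \<Longrightarrow> \<not> nat_prime q \<Longrightarrow> x q = 0"
proof -
  assume "x \<in> Bc" "\<not> nat_prime q"
  then have "x q < KK q" "KK q = 1" unfolding Bc_def by (blast, simp add: KK_def)
  then show ?thesis by simp
qed

lemma Pc_single: "x \<in> Pc p \<Longrightarrow> single p (x p) = x"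
  unfolding Pc_def single_def by auto

lemma PR_Pc: "y \<in> carrier PR \<Longrightarrow> nat_prime p \<Longrightarrow> y p \<in> Pc p"
  unfolding carrier_PR by (simp add: PiE_iff)

lemma PR_nonprime: "y \<in> carrier PR \<Longrightarrow> \<not> nat_prime p \<Longrightarrow> y p = undefined"
  unfolding carrier_PR by (auto simp: PiE_iff extensional_def)

lemma psi_Bc: "y \<in> carrier PR \<Longrightarrow> psi y \<in> Bc"
proof -
  assume y: "y \<in> carrier PR"
  have "psi y q < KK q" for q
  proof (cases "nat_prime q")
    case True
    then have "y q \<in> Bc" using PR_Pc[OF y True] by (simp add: Pc_def)
    then show ?thesis using True by (simp add: psi_def Bc_def)
  next
    case False then show ?thesis using KK_pos by (simp add: psi_def)
  qed
  then show ?thesis by (simp add: Bc_def)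
qed

lemma phi_psi: "y \<in> carrier PR \<Longrightarrow> phi (psi y) = y"
proof -
  assume y: "y \<in> carrier PR"
  show ?thesis
  proof
    fix p show "phi (psi y) p = y p"
    proof (cases "nat_prime p")
      case True
      then have "y p \<in> Pc p" using PR_Pc[OF y] by simp
      then show ?thesis using True unfolding phi_def psi_def by (simp add: Pc_single)
    next
      case False
      then show ?thesis using PR_nonprime[OF y False] unfolding phi_def by simp
    qed
  qed
qed

lemma phi_hom: "phi \<in> hom GG PR"
proof (rule homI)
  fix x assume "x \<in> carrier GG"
  then show "phi x \<in> carrier PR" by (simp add: carrier_GG phi_carrier)
next
  fix x y assume x: "x \<in> carrier GG" and y: "y \<in> carrier GG"
  have h: "single p ((x \<otimes>\<^bsub>GG\<^esub> y) p) = single p (x p) \<otimes>\<^bsub>GG\<^esub> single p (y p)" for p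
  proof
    fix q show "single p ((x \<otimes>\<^bsub>GG\<^esub> y) p) q = (single p (x p) \<otimes>\<^bsub>GG\<^esub> single p (y p)) q"
      unfolding mult_GG single_def by (cases "q = p") (simp_all add: nrm_def)
  qed
  show "phi (x \<otimes>\<^bsub>GG\<^esub> y) = phi x \<otimes>\<^bsub>PR\<^esub> phi y"
    unfolding mult_PR phi_def by (rule restrict_ext) (simp add: h)
qed

lemma phi_inj: "inj_on phi (carrier GG)"
proof (rule inj_onI)
  fix x y assume x: "x \<in> carrier GG" and y: "y \<in> carrier GG" and e: "phi x = phi y"
  show "x = y"
  proof
    fix q show "x q = y q"
    proof (cases "nat_prime q")
      case True
      have "phi x q = phi y q" using e by simp
      then have "single q (x q) = single q (y q)" using True unfolding phi_def by simp
      then have "single q (x q) q = single q (y q) q" by simp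
      then show ?thesis unfolding single_def by simp
    next
      case False
      have "x \<in> Bc" "y \<in> Bc" using x y by (simp_all add: carrier_GG)
      then show ?thesis using Bc_nonprime False by metis
    qed
  qed
qed

lemma phi_comp: "nat_prime p \<Longrightarrow> x \<in> p_component GG p \<Longrightarrow>
   phi x = (\<lambda>q\<in>{q. nat_prime q}. if q = p then x else \<one>\<^bsub>GG\<^esub>)"
proof -
  assume p: "nat_prime p" and "x \<in> p_component GG p"
  then have x: "x \<in> Pc p" by (simp add: pcomp)
  show ?thesis unfolding phi_def
  proof (intro restrict_ext)
    fix q assume "q \<in> {q. nat_prime q}"
    show "single q (x q) = (if q = p then x else \<one>\<^bsub>GG\<^esub>)"
    proof (cases "q = p")
      case True then show ?thesis using Pc_single[OF x] by simp
    next
      case False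
      then have "x q = 0" using x by (simp add: Pc_def)
      then show ?thesis using False by (auto simp: single_def one_GG)
    qed
  qed
qed


lemma cong_KK_nonprime: "\<not> nat_prime q \<Longrightarrow> [a = b] (mod int (KK q))"
  by (simp add: KK_def)

lemma psi_good:
  assumes y: "y \<in> carrier PR" and x0: "x0 \<in> carrier GG" and n: "n > 0"
    and e: "y [^]\<^bsub>PR\<^esub> (n::nat) = phi x0"
  shows "good (psi y)"
proof -
  have c: "[int n * int (psi y q) = int (x0 q)] (mod int (KK q))" for q
  proof (cases "nat_prime q")
    case True
    have yq: "y q \<in> Bc" using PR_Pc[OF y True] by (simp add: Pc_def)
    have "(y [^]\<^bsub>PR\<^esub> n) q = nrm (\<lambda>r. int n * int (y q r))"
      using pow_PR[OF True] pow_GG[OF yq] by simp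
    moreover have "phi x0 q = single q (x0 q)" using True by (simp add: phi_def)
    ultimately have "nrm (\<lambda>r. int n * int (y q r)) q = x0 q" using e by (metis single_def)
    then have "int (x0 q) = (int n * int (y q q)) mod int (KK q)" using int_nrm by metis
    then show ?thesis using True by (simp add: psi_def cong_def)
  next
    case False then show ?thesis by (rule cong_KK_nonprime)
  qed
  obtain n0 m N where 1: "n0 > 0" "\<And>q. q \<ge> N \<Longrightarrow> [int n0 * int (x0 q) = m * int (ee q)] (mod int (KK q))"
    using x0 unfolding carrier_GG good_def by blast
  have "[int (n0 * n) * int (psi y q) = m * int (ee q)] (mod int (KK q))" if "q \<ge> N" for q
  proof -
    have "[int n0 * (int n * int (psi y q)) = int n0 * int (x0 q)] (mod int (KK q))"
      by (rule cong_scalar_left) (rule c)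
    then show ?thesis using cong_trans 1(2)[OF that] by (simp add: mult.assoc) 
  qed
  then show ?thesis unfolding good_def using 1(1) n by (intro exI[of _ "n0 * n"]) auto
qed

lemma group_hom_phi: "group_hom GG PR phi"
  by (simp add: group_hom_def group_hom_axioms_def G.is_group group_PR phi_hom)

lemma pure_phi: "pure_subgroup (phi ` carrier GG) PR"
  unfolding pure_subgroup_def
proof (intro conjI allI impI ballI)
  show "subgroup (phi ` carrier GG) PR" by (rule group_hom.img_is_subgroup[OF group_hom_phi])
next
  fix n :: nat and x assume n: "n > 0" and x: "x \<in> phi ` carrier GG"
    and "\<exists>y\<in>carrier PR. y [^]\<^bsub>PR\<^esub> n = x"
  then obtain y where y: "y \<in> carrier PR" "y [^]\<^bsub>PR\<^esub> n = x" by blast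
  obtain x0 where x0: "x0 \<in> carrier GG" "x = phi x0" using x by blast
  have "psi y \<in> carrier GG"
    using psi_good[OF y(1) x0(1) n] y(2) x0(2) psi_Bc[OF y(1)] by (simp add: carrier_GG)
  then have "y \<in> phi ` carrier GG" using phi_psi[OF y(1)] by (metis image_eqI)
  then show "\<exists>y\<in>phi ` carrier GG. y [^]\<^bsub>PR\<^esub> n = x" using y(2) by blast
qed

lemma sum_in_phi: "carrier (sum_components GG) \<subseteq> phi ` carrier GG"
proof
  fix y assume "y \<in> carrier (sum_components GG)"
  then have y: "y \<in> carrier PR" and fin: "finite {p \<in> {p. nat_prime p}. y p \<noteq> \<one>\<^bsub>subgroup_generated GG (p_component GG p)\<^esub>}"
    unfolding sum_components_def prod_components_def
    by (subst (asm) carrier_sum_group, simp, simp)+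
  obtain N where N: "\<And>p. p \<in> {p \<in> {p. nat_prime p}. y p \<noteq> \<one>\<^bsub>subgroup_generated GG (p_component GG p)\<^esub>} \<Longrightarrow> p < N"
    using finite_nat_bounded[OF fin] by blast
  have "psi y q = 0" if "q \<ge> N" for q
  proof (cases "nat_prime q")
    case True
    then have "y q = (\<lambda>q. 0)" using N[of q] that by (force simp: one_GG)
    then show ?thesis by (simp add: psi_def)
  next
    case False then show ?thesis by (simp add: psi_def)
  qed
  then have "good (psi y)" unfolding good_def
    by (intro exI[of _ 1] conjI exI[of _ 0] exI[of _ N]) auto
  then have "psi y \<in> carrier GG" using psi_Bc[OF y] by (simp add: carrier_GG)
  then show "y \<in> phi ` carrier GG" using phi_psi[OF y] by (metis image_eqI)
qed

lemma sp_GG: "sp_group GG"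
  unfolding sp_group_def
proof (intro conjI)
  show "comm_group GG" by (rule comm_group_GG)
  have "{p. nat_prime p \<and> p_component GG p \<noteq> {\<one>\<^bsub>GG\<^esub>}} = {p. nat_prime p}"
    using Pc_nontriv pcomp by auto
  then show "infinite {p. nat_prime p \<and> p_component GG p \<noteq> {\<one>\<^bsub>GG\<^esub>}}"
    using primes_infinite by simp
  show "\<exists>\<phi>. \<phi> \<in> hom GG PR \<and> inj_on \<phi> (carrier GG) \<and>
        (\<forall>p x. nat_prime p \<and> x \<in> p_component GG p \<longrightarrow>
            \<phi> x = (\<lambda>q\<in>{q. nat_prime q}. if q = p then x else \<one>\<^bsub>GG\<^esub>)) \<and>
        pure_subgroup (\<phi> ` carrier GG) PR \<and>
        carrier (sum_components GG) \<subseteq> \<phi> ` carrier GG"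
    using phi_hom phi_inj phi_comp pure_phi sum_in_phi by blast
qed



context comm_group
begin

lemma tf_int:
  assumes tf: "\<And>y k. y \<in> carrier G \<Longrightarrow> (k::nat) > 0 \<Longrightarrow> y [^] k = \<one> \<Longrightarrow> y = \<one>"
    and t: "t \<in> carrier G" and N: "(N::int) \<noteq> 0" and e: "t [^] N = \<one>"
  shows "t = \<one>"
proof (cases "N > 0")
  case True
  then have "t [^] (nat N) = \<one>" using e pow_nat[of N G t] by simp
  then show ?thesis using tf[OF t, of "nat N"] True by simp
next
  case False
  then have "inv (t [^] (nat (-N))) = \<one>" using e pow_nat[of "-N" G t] int_pow_neg[OF t, of "-N"] by simp
  then have "t [^] (nat (-N)) = \<one>" using t by (metis inv_eq_1_iff nat_pow_closed)
  then show ?thesis using tf[OF t, of "nat (-N)"] False N by simp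
qed

lemma div_int:
  assumes dv: "\<And>y k. y \<in> carrier G \<Longrightarrow> (k::nat) > 0 \<Longrightarrow> \<exists>w\<in>carrier G. w [^] k = y"
    and v: "v \<in> carrier G" and N: "(N::int) \<noteq> 0"
  shows "\<exists>w\<in>carrier G. w [^] N = v"
proof (cases "N > 0")
  case True
  obtain w where w: "w \<in> carrier G" "w [^] (nat N) = v" using dv[OF v, of "nat N"] True by auto
  then show ?thesis using pow_nat[of N G w] True by auto
next
  case False
  obtain w where w: "w \<in> carrier G" "w [^] (nat (-N)) = v" using dv[OF v, of "nat (-N)"] False N by auto
  have "(inv w) [^] N = inv (w [^] N)" using w(1) by (rule int_pow_inv)
  also have "\<dots> = w [^] (- N)" using int_pow_neg[OF w(1), of N] by simp
  also have "\<dots> = v" using pow_nat[of "-N" G w] False w(2) by simp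
  finally show ?thesis using w(1) by blast
qed

lemma abstract_main:
  assumes a0: "a0 \<in> carrier G" "\<And>n::nat. n > 0 \<Longrightarrow> a0 [^] n \<noteq> \<one>"
    and rel: "\<And>y. y \<in> carrier G \<Longrightarrow> \<exists>n::nat. n > 0 \<and> (\<exists>m::int. y [^] n = a0 [^] m)"
    and tf: "\<And>y k. y \<in> carrier G \<Longrightarrow> (k::nat) > 0 \<Longrightarrow> y [^] k = \<one> \<Longrightarrow> y = \<one>"
    and dv: "\<And>y k. y \<in> carrier G \<Longrightarrow> (k::nat) > 0 \<Longrightarrow> \<exists>w\<in>carrier G. w [^] k = y"
  shows "has_tf_rank G 1" "strongly_co_hopfian G"
proof -
  have a0inf: "a0 \<in> infinite_order_elems G" using a0 unfolding infinite_order_elems_def by auto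
  have indep: "independent_set G {a0}"
    unfolding independent_set_def
  proof (intro conjI allI impI ballI)
    show "{a0} \<subseteq> carrier G" using a0 by simp
  next
    fix F and c :: "'a \<Rightarrow> int" and x
    assume h: "finite F \<and> F \<subseteq> {a0} \<and> finprod G (\<lambda>x. x [^] c x) F = \<one>" and x: "x \<in> F"
    then have F: "F = {a0}" "x = a0" by auto
    then show "x [^] c x = \<one>" using h a0(1) by simp
  qed
  have maxl: "S' = {a0}" if S': "{a0} \<subseteq> S'" "S' \<subseteq> infinite_order_elems G" "independent_set G S'" for S'
  proof (rule ccontr)
    assume "S' \<noteq> {a0}"
    then obtain y where y: "y \<in> S'" "y \<noteq> a0" using S'(1) by blast
    then have yc: "y \<in> carrier G" "\<And>n::nat. n > 0 \<Longrightarrow> y [^] n \<noteq> \<one>"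
      using S'(2) unfolding infinite_order_elems_def by auto
    obtain n :: nat and m :: int where nm: "n > 0" "y [^] n = a0 [^] m" using rel[OF yc(1)] by blast
    define c where "c = (\<lambda>z. if z = a0 then - m else int n)"
    have "finprod G (\<lambda>x. x [^] c x) {a0, y} = a0 [^] (-m) \<otimes> y [^] (int n)"
      using y(2) a0(1) yc(1) by (simp add: c_def)
    also have "\<dots> = \<one>" using nm(2) a0(1) yc(1) by (simp add: int_pow_int int_pow_neg)
    finally have "finprod G (\<lambda>x. x [^] c x) {a0, y} = \<one>" .
    moreover have "finite {a0, y}" "{a0, y} \<subseteq> S'" using S'(1) y(1) by auto
    moreover have "\<forall>F (c :: 'a \<Rightarrow> int). finite F \<and> F \<subseteq> S' \<and>
        finprod G (\<lambda>x. x [^] c x) F = \<one> \<longrightarrow> (\<forall>x\<in>F. x [^] c x = \<one>)"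
      using S'(3) unfolding independent_set_def by blast
    ultimately have "\<forall>x\<in>{a0, y}. x [^] c x = \<one>" by blast
    then have "y [^] c y = \<one>" by blast
    then have "y [^] n = \<one>" using y(2) by (simp add: c_def int_pow_int)
    then show False using yc(2) nm(1) by blast
  qed
  show "has_tf_rank G 1" unfolding has_tf_rank_def
    using a0inf indep maxl by (intro exI[of _ "{a0}"]) auto
  show "strongly_co_hopfian G" unfolding strongly_co_hopfian_def
  proof
    fix f assume f: "f \<in> hom G G"
    have grp: "group G" by (rule is_group)
    have fc: "f x \<in> carrier G" if "x \<in> carrier G" for x using f that by (simp add: hom_in_carrier)
    have f1: "f \<one> = \<one>" using f grp by (simp add: hom_one)
    show "\<exists>n. (f ^^ n) ` carrier G = (f ^^ Suc n) ` carrier G"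
    proof (cases "f a0 = \<one>")
      case True
      have all1: "f y = \<one>" if y: "y \<in> carrier G" for y
      proof -
        obtain n :: nat and m :: int where nm: "n > 0" "y [^] n = a0 [^] m" using rel[OF y] by blast
        have "f y [^] n = f (y [^] n)" using hom_nat_pow[OF f y grp grp] by simp
        also have "\<dots> = f (a0 [^] m)" using nm by simp
        also have "\<dots> = f a0 [^] m" using hom_int_pow[OF f a0(1) grp grp] by simp
        also have "\<dots> = \<one>" using True by simp
        finally show ?thesis using tf[OF fc[OF y] nm(1)] by simp
      qed
      then have "f ` carrier G = {\<one>}" by auto
      moreover have "(f ^^ Suc 1) ` carrier G = f ` (f ` carrier G)" by (simp add: image_image)
      ultimately have "(f ^^ 1) ` carrier G = {\<one>}" "(f ^^ Suc 1) ` carrier G = {\<one>}"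
        using f1 by simp_all
      then show ?thesis by metis
    next
      case False
      have "carrier G \<subseteq> f ` carrier G"
      proof
        fix z assume z: "z \<in> carrier G"
        define u where "u = f a0"
        have u: "u \<in> carrier G" using fc[OF a0(1)] by (simp add: u_def)
        obtain k' :: nat and m' :: int where km': "k' > 0" "u [^] k' = a0 [^] m'" using rel[OF u] by blast
        have m'0: "m' \<noteq> 0"
        proof
          assume "m' = 0"
          then have "u [^] k' = \<one>" using km' by simp
          then show False using tf[OF u km'(1)] False by (simp add: u_def)
        qed
        obtain k :: nat and m :: int where km: "k > 0" "z [^] k = a0 [^] m" using rel[OF z] by blast
        define v where "v = a0 [^] (int k' * m)"
        have v: "v \<in> carrier G" using a0(1) by (simp add: v_def)
        have fv: "f v = a0 [^] (m' * m)"
        proof -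
          have "f v = u [^] (int k' * m)" using hom_int_pow[OF f a0(1) grp grp] by (simp add: v_def u_def)
          also have "\<dots> = (u [^] (int k')) [^] m" using u by (simp add: int_pow_pow)
          also have "\<dots> = (a0 [^] m') [^] m" using km'(2) by (simp add: int_pow_int)
          also have "\<dots> = a0 [^] (m' * m)" using a0(1) by (simp add: int_pow_pow)
          finally show ?thesis .
        qed
        define N where "N = int k * m'"
        have N0: "N \<noteq> 0" using km(1) m'0 by (simp add: N_def)
        have zN: "z [^] N = a0 [^] (m' * m)"
        proof -
          have "z [^] N = (z [^] (int k)) [^] m'" using z by (simp add: int_pow_pow N_def)
          also have "\<dots> = (a0 [^] m) [^] m'" using km(2) by (simp add: int_pow_int)
          also have "\<dots> = a0 [^] (m' * m)" using a0(1) by (simp add: int_pow_pow mult.commute)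
          finally show ?thesis .
        qed
        obtain w where w: "w \<in> carrier G" "w [^] N = v" using div_int[OF dv v N0] by blast
        have "f w [^] N = z [^] N"
          using hom_int_pow[OF f w(1) grp grp, of N] w(2) fv zN by simp
        then have "(f w \<otimes> inv z) [^] N = \<one>"
          using fc[OF w(1)] z by (simp add: int_pow_distrib int_pow_inv)
        then have "f w \<otimes> inv z = \<one>" using tf_int[OF tf _ N0] fc[OF w(1)] z by simp
        moreover have "f w = (f w \<otimes> inv z) \<otimes> z" using fc[OF w(1)] z by (simp add: m_assoc)
        ultimately have "f w = z" using z by simp
        then show "z \<in> f ` carrier G" using w(1) by blast
      qed
      moreover have "f ` carrier G \<subseteq> carrier G" using fc by auto
      ultimately have "(f ^^ 0) ` carrier G = (f ^^ Suc 0) ` carrier G" by auto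
      then show ?thesis by blast
    qed
  qed
qed

end



lemma coprime_KK: "\<not> (nat_prime q \<and> q dvd k) \<Longrightarrow> coprime (int k) (int (KK q))"
proof (cases "nat_prime q")
  case False then show ?thesis by (simp add: KK_def)
next
  case True
  assume a: "\<not> (nat_prime q \<and> q dvd k)"
  then have "\<not> q dvd k" using True by simp
  then have "coprime q k" using True by (simp add: prime_imp_coprime)
  then have "coprime k (q ^ q)" by (simp add: coprime_commute)
  then show ?thesis using True by (simp add: KK_def)
qed

lemma ee_lt: "ee q < KK q"
proof (cases "nat_prime q")
  case True
  then have "q > 1" using prime_gt_1_nat by blast
  then have "q ^ (q - 1) < q ^ q" by (intro power_strict_increasing) auto
  then show ?thesis using True by (simp add: ee_def KK_def)
next
  case False then show ?thesis by (simp add: ee_def KK_def)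
qed

lemma ee_carrier: "ee \<in> carrier GG"
proof -
  have "good ee" unfolding good_def
    by (intro exI[of _ "1::nat"] conjI exI[of _ "1::int"] exI[of _ 0]) auto
  then show ?thesis using ee_lt by (simp add: carrier_GG Bc_def)
qed

lemma normal_TT: "TT \<lhd> GG"
  using G.normal_iff_subgroup subgroup_TT by blast

interpretation TN: normal TT GG by (rule normal_TT)

interpretation Q: comm_group "GG Mod TT"
  by (rule G.abelian_FactGroup[OF subgroup_TT])

lemma mult_inv_val: "a \<in> carrier GG \<Longrightarrow> b \<in> carrier GG \<Longrightarrow>
   (b \<otimes>\<^bsub>GG\<^esub> inv\<^bsub>GG\<^esub> a) q = 0 \<longleftrightarrow> [int (a q) = int (b q)] (mod int (KK q))"
proof -
  assume a: "a \<in> carrier GG" and b: "b \<in> carrier GG"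
  have "int ((b \<otimes>\<^bsub>GG\<^esub> inv\<^bsub>GG\<^esub> a) q) = (int (b q) + (- int (a q)) mod int (KK q)) mod int (KK q)"
    unfolding mult_GG inv_GG[OF a] int_nrm by simp
  also have "\<dots> = (int (b q) - int (a q)) mod int (KK q)" by (simp add: mod_add_right_eq)
  finally have e: "int ((b \<otimes>\<^bsub>GG\<^esub> inv\<^bsub>GG\<^esub> a) q) = (int (b q) - int (a q)) mod int (KK q)" .
  have "(b \<otimes>\<^bsub>GG\<^esub> inv\<^bsub>GG\<^esub> a) q = 0 \<longleftrightarrow> (int (b q) - int (a q)) mod int (KK q) = 0"
    using e by linarith
  also have "\<dots> \<longleftrightarrow> [int (b q) = int (a q)] (mod int (KK q))"
    by (simp add: cong_iff_dvd_diff mod_eq_0_iff_dvd)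
  finally show ?thesis by (simp add: cong_sym_eq)
qed

lemma coset_eq: "a \<in> carrier GG \<Longrightarrow> b \<in> carrier GG \<Longrightarrow>
   (TT #>\<^bsub>GG\<^esub> a = TT #>\<^bsub>GG\<^esub> b) \<longleftrightarrow> (\<exists>N. \<forall>q\<ge>N. [int (a q) = int (b q)] (mod int (KK q)))"
proof -
  assume a: "a \<in> carrier GG" and b: "b \<in> carrier GG"
  have "(TT #>\<^bsub>GG\<^esub> a = TT #>\<^bsub>GG\<^esub> b) \<longleftrightarrow> b \<in> TT #>\<^bsub>GG\<^esub> a"
    using G.repr_independence[OF _ a subgroup_TT] G.repr_independenceD[OF subgroup_TT b] by blast
  also have "\<dots> \<longleftrightarrow> b \<otimes>\<^bsub>GG\<^esub> inv\<^bsub>GG\<^esub> a \<in> TT"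
    by (rule subgroup.rcos_module[OF subgroup_TT G.is_group a b])
  also have "\<dots> \<longleftrightarrow> (\<exists>N. \<forall>q\<ge>N. (b \<otimes>\<^bsub>GG\<^esub> inv\<^bsub>GG\<^esub> a) q = 0)"
    unfolding TT_def using a b by auto
  also have "\<dots> \<longleftrightarrow> (\<exists>N. \<forall>q\<ge>N. [int (a q) = int (b q)] (mod int (KK q)))"
    using mult_inv_val[OF a b] by simp
  finally show ?thesis .
qed

abbreviation cls where "cls a \<equiv> TT #>\<^bsub>GG\<^esub> a"

lemma one_cls: "cls \<one>\<^bsub>GG\<^esub> = TT"
  using subgroup.subset[OF subgroup_TT] by simp

lemma carrier_Q: "carrier (GG Mod TT) = cls ` carrier GG"
  by (rule carrier_FactGroup)

lemma pow_cls: "a \<in> carrier GG \<Longrightarrow> (cls a) [^]\<^bsub>GG Mod TT\<^esub> (k::nat) = cls (a [^]\<^bsub>GG\<^esub> k)"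
  by (rule TN.FactGroup_pow)

lemma ipow_cls: "a \<in> carrier GG \<Longrightarrow> (cls a) [^]\<^bsub>GG Mod TT\<^esub> (k::int) = cls (a [^]\<^bsub>GG\<^esub> k)"
  by (rule TN.FactGroup_int_pow)

lemma val_pow: "x \<in> carrier GG \<Longrightarrow> [int ((x [^]\<^bsub>GG\<^esub> (k::nat)) q) = int k * int (x q)] (mod int (KK q))"
  using cong_nrm[of "\<lambda>q. int k * int (x q)" q] by (simp add: pow_GG carrier_GG)

lemma val_ipow: "x \<in> carrier GG \<Longrightarrow> [int ((x [^]\<^bsub>GG\<^esub> (k::int)) q) = k * int (x q)] (mod int (KK q))"
  using cong_nrm[of "\<lambda>q. k * int (x q)" q] by (simp add: int_pow_GG)

lemma Q_a0: "cls ee \<in> carrier (GG Mod TT)"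
  using ee_carrier carrier_Q by blast

lemma Q_inf: "n > 0 \<Longrightarrow> (cls ee) [^]\<^bsub>GG Mod TT\<^esub> (n::nat) \<noteq> \<one>\<^bsub>GG Mod TT\<^esub>"
proof
  assume n: "n > 0" and e: "(cls ee) [^]\<^bsub>GG Mod TT\<^esub> n = \<one>\<^bsub>GG Mod TT\<^esub>"
  have "cls (ee [^]\<^bsub>GG\<^esub> n) = cls \<one>\<^bsub>GG\<^esub>" using e pow_cls[OF ee_carrier] one_cls by simp
  then obtain N where N: "\<And>q. q \<ge> N \<Longrightarrow> [int ((ee [^]\<^bsub>GG\<^esub> n) q) = int (\<one>\<^bsub>GG\<^esub> q)] (mod int (KK q))"
    using coset_eq[OF G.nat_pow_closed[OF ee_carrier] G.one_closed] by blast
  obtain q where q: "nat_prime q" "q > max N n" using bigger_prime by blast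
  have "[int n * int (ee q) = int n * 0] (mod int (KK q))"
    using cong_trans[OF cong_sym[OF val_pow[OF ee_carrier]] N[of q]] q by (simp add: one_GG)
  moreover have "\<not> (nat_prime q \<and> q dvd n)" using q n by (auto dest: dvd_imp_le)
  ultimately have "[int (ee q) = 0] (mod int (KK q))" using cancel_KK by blast
  then have "int (KK q) dvd int (ee q)" by (simp add: cong_0_iff)
  then have "KK q dvd ee q" by (simp only: int_dvd_int_iff)
  moreover have "ee q > 0" using q(1) by (simp add: ee_def prime_gt_0_nat)
  ultimately have "KK q \<le> ee q" by (simp add: dvd_imp_le)
  moreover have "ee q < KK q" by (rule ee_lt)
  ultimately show False by simp
qed

lemma Q_rel: "y \<in> carrier (GG Mod TT) \<Longrightarrow> \<exists>n::nat. n > 0 \<and> (\<exists>m::int. y [^]\<^bsub>GG Mod TT\<^esub> n = (cls ee) [^]\<^bsub>GG Mod TT\<^esub> m)"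
proof -
  assume "y \<in> carrier (GG Mod TT)"
  then obtain x where x: "x \<in> carrier GG" "y = cls x" using carrier_Q by blast
  then obtain n m N where nm: "n > 0" "\<And>q. q \<ge> N \<Longrightarrow> [int n * int (x q) = m * int (ee q)] (mod int (KK q))"
    unfolding carrier_GG good_def by blast
  have "cls (x [^]\<^bsub>GG\<^esub> n) = cls (ee [^]\<^bsub>GG\<^esub> m)"
    unfolding coset_eq[OF G.nat_pow_closed[OF x(1)] G.int_pow_closed[OF ee_carrier]]
  proof (intro exI allI impI)
    fix q assume "q \<ge> N"
    show "[int ((x [^]\<^bsub>GG\<^esub> n) q) = int ((ee [^]\<^bsub>GG\<^esub> m) q)] (mod int (KK q))"
      using cong_trans[OF val_pow[OF x(1)] cong_trans[OF nm(2)[OF \<open>q \<ge> N\<close>] cong_sym[OF val_ipow[OF ee_carrier]]]] .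
  qed
  then show ?thesis using nm(1) x pow_cls ipow_cls ee_carrier by metis
qed

lemma Q_tf: "y \<in> carrier (GG Mod TT) \<Longrightarrow> (k::nat) > 0 \<Longrightarrow> y [^]\<^bsub>GG Mod TT\<^esub> k = \<one>\<^bsub>GG Mod TT\<^esub> \<Longrightarrow> y = \<one>\<^bsub>GG Mod TT\<^esub>"
proof -
  assume "y \<in> carrier (GG Mod TT)" and k: "k > 0" and e: "y [^]\<^bsub>GG Mod TT\<^esub> k = \<one>\<^bsub>GG Mod TT\<^esub>"
  then obtain x where x: "x \<in> carrier GG" "y = cls x" using carrier_Q by blast
  have "cls (x [^]\<^bsub>GG\<^esub> k) = cls \<one>\<^bsub>GG\<^esub>" using e x pow_cls one_cls by simp
  then obtain N where N: "\<And>q. q \<ge> N \<Longrightarrow> [int ((x [^]\<^bsub>GG\<^esub> k) q) = int (\<one>\<^bsub>GG\<^esub> q)] (mod int (KK q))"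
    using coset_eq[OF G.nat_pow_closed[OF x(1)] G.one_closed] by blast
  have "[int (x q) = int (\<one>\<^bsub>GG\<^esub> q)] (mod int (KK q))" if q: "q \<ge> max N (Suc k)" for q
  proof -
    have "[int k * int (x q) = int k * 0] (mod int (KK q))"
      using cong_trans[OF cong_sym[OF val_pow[OF x(1)]] N[of q]] q by (simp add: one_GG)
    moreover have "\<not> (nat_prime q \<and> q dvd k)" using q k by (auto dest: dvd_imp_le)
    ultimately show ?thesis using cancel_KK by (simp add: one_GG)
  qed
  then have "cls x = cls \<one>\<^bsub>GG\<^esub>" using coset_eq[OF x(1) G.one_closed] by blast
  then show ?thesis using x one_cls by simp
qed

lemma Q_dv: "y \<in> carrier (GG Mod TT) \<Longrightarrow> (k::nat) > 0 \<Longrightarrow> \<exists>w\<in>carrier (GG Mod TT). w [^]\<^bsub>GG Mod TT\<^esub> k = y"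
proof -
  assume "y \<in> carrier (GG Mod TT)" and k: "k > 0"
  then obtain x where x: "x \<in> carrier GG" "y = cls x" using carrier_Q by blast
  define w where "w = nrm (\<lambda>q. SOME u. [int k * u = int (x q)] (mod int (KK q)))"
  have wq: "[int k * int (w q) = int (x q)] (mod int (KK q))" if q: "q \<ge> Suc k" for q
  proof -
    have "\<not> (nat_prime q \<and> q dvd k)" using q k by (auto dest: dvd_imp_le)
    then have "coprime (int k) (int (KK q))" by (rule coprime_KK)
    then obtain v where v: "[int k * v = 1] (mod int (KK q))" using cong_solve_coprime_int by blast
    have "[int k * (v * int (x q)) = int (x q)] (mod int (KK q))"
      using cong_scalar_right[OF v, of "int (x q)"] by (simp add: mult.assoc)
    then have ex: "\<exists>u. [int k * u = int (x q)] (mod int (KK q))" by blast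
    have "[int k * int (w q) = int k * (SOME u. [int k * u = int (x q)] (mod int (KK q)))] (mod int (KK q))"
      unfolding w_def by (rule cong_scalar_left) (rule cong_nrm)
    then show ?thesis using cong_trans someI_ex[OF ex] by blast
  qed
  obtain n m N where nm: "n > 0" "\<And>q. q \<ge> N \<Longrightarrow> [int n * int (x q) = m * int (ee q)] (mod int (KK q))"
    using x(1) unfolding carrier_GG good_def by blast
  have "[int (n * k) * int (w q) = m * int (ee q)] (mod int (KK q))" if q: "q \<ge> max N (Suc k)" for q
  proof -
    have "[int n * (int k * int (w q)) = int n * int (x q)] (mod int (KK q))"
      by (rule cong_scalar_left) (rule wq, use q in simp)
    then show ?thesis using cong_trans nm(2)[of q] q by (simp add: mult.assoc)
  qed
  then have "good w" unfolding good_def using nm(1) k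
    by (intro exI[of _ "n * k"] conjI exI[of _ m] exI[of _ "max N (Suc k)"]) auto
  then have wc: "w \<in> carrier GG" by (simp add: carrier_GG w_def nrm_Bc)
  have "cls (w [^]\<^bsub>GG\<^esub> k) = cls x"
    unfolding coset_eq[OF G.nat_pow_closed[OF wc] x(1)]
  proof (intro exI allI impI)
    fix q assume q: "q \<ge> Suc k"
    show "[int ((w [^]\<^bsub>GG\<^esub> k) q) = int (x q)] (mod int (KK q))"
      using cong_trans[OF val_pow[OF wc] wq[OF q]] .
  qed
  then show ?thesis using wc x pow_cls carrier_Q by (metis image_eqI)
qed

lemmas Q_main = Q.abstract_main[OF Q_a0 Q_inf Q_rel Q_tf Q_dv]



definition fm :: "(nat \<Rightarrow> nat) \<Rightarrow> nat \<Rightarrow> nat" where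
  "fm x = nrm (\<lambda>q. int q * int (x q))"

lemma fm_pow: "x \<in> Bc \<Longrightarrow> (fm ^^ k) x = nrm (\<lambda>q. int q ^ k * int (x q))"
proof (induction k)
  case 0 then show ?case by (simp add: nrm_id)
next
  case (Suc k)
  have "(fm ^^ Suc k) x = nrm (\<lambda>q. int q * int (nrm (\<lambda>q. int q ^ k * int (x q)) q))"
    using Suc by (simp only: funpow.simps comp_apply) (simp add: fm_def)
  also have "\<dots> = nrm (\<lambda>q. int q ^ Suc k * int (x q))"
    unfolding nrm_eq_iff int_nrm mod_mult_right_eq by (simp add: mult.assoc)
  finally show ?case .
qed

lemma q_ee: "[int q * (m * int (ee q)) = 0] (mod int (KK q))"
proof (cases "nat_prime q")
  case True
  have "q - 1 + 1 = q" using prime_gt_0_nat[OF True] by simp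
  then have qq: "q * q ^ (q - 1) = q ^ q" by (metis power_Suc Suc_eq_plus1)
  have "int q * (m * int (ee q)) = m * int (q * q ^ (q - 1))" using True by (simp add: ee_def)
  also have "\<dots> = m * int (KK q)" using True qq by (simp add: KK_def)
  finally have "int q * (m * int (ee q)) = m * int (KK q)" .
  then show ?thesis unfolding cong_0_iff by (metis dvd_triv_right)
next
  case False then show ?thesis by (rule cong_KK_nonprime)
qed

lemma fm_carrier: "x \<in> carrier GG \<Longrightarrow> fm x \<in> carrier GG"
proof -
  assume x: "x \<in> carrier GG"
  obtain n m N where nm: "n > 0" "\<And>q. q \<ge> N \<Longrightarrow> [int n * int (x q) = m * int (ee q)] (mod int (KK q))"
    using x unfolding carrier_GG good_def by blast
  have "[int n * int (fm x q) = 0 * int (ee q)] (mod int (KK q))" if q: "q \<ge> N" for q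
  proof -
    have a: "[int n * int (fm x q) = int n * (int q * int (x q))] (mod int (KK q))"
      unfolding fm_def by (rule cong_scalar_left) (rule cong_nrm[of "\<lambda>q. int q * int (x q)", simplified])
    have b: "[int q * (int n * int (x q)) = int q * (m * int (ee q))] (mod int (KK q))"
      by (rule cong_scalar_left) (rule nm(2)[OF q])
    have "[int n * int (fm x q) = int q * (m * int (ee q))] (mod int (KK q))"
      using cong_trans[OF a] b by (simp add: mult.left_commute)
    then show ?thesis using cong_trans[OF _ q_ee] by simp
  qed
  then have "good (fm x)" unfolding good_def using nm(1)
    by (intro exI[of _ n] conjI exI[of _ "0::int"] exI[of _ N]) auto
  then show ?thesis by (simp add: carrier_GG fm_def nrm_Bc)
qed

lemma fm_mult: "fm (x \<otimes>\<^bsub>GG\<^esub> y) = fm x \<otimes>\<^bsub>GG\<^esub> fm y"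
  unfolding fm_def mult_GG nrm_eq_iff int_nrm mod_mult_right_eq mod_add_eq
  by (simp add: distrib_left)

lemma fm_hom: "fm \<in> hom GG GG"
  by (rule homI) (simp_all add: fm_carrier fm_mult)

lemma fm_TT: "x \<in> TT \<Longrightarrow> fm x \<in> TT"
proof -
  assume "x \<in> TT"
  then obtain N where N: "x \<in> carrier GG" "\<And>q. q \<ge> N \<Longrightarrow> x q = 0" unfolding TT_def by auto
  have "\<forall>q\<ge>N. fm x q = 0" using N(2) by (simp add: fm_def nrm_def)
  then show ?thesis unfolding TT_def using fm_carrier[OF N(1)] by blast
qed

lemma carrier_SGT: "carrier (subgroup_generated GG TT) = TT"
  by (rule subgroup.carrier_subgroup_generated_subgroup[OF subgroup_TT])

lemma fm_hom_T: "fm \<in> hom (subgroup_generated GG TT) (subgroup_generated GG TT)"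
  by (rule homI) (simp_all add: carrier_SGT fm_TT fm_mult)

lemma key_neq:
  assumes q: "nat_prime q" "q > Suc n" and z: "z \<in> Bc"
  shows "(fm ^^ n) (single q 1) \<noteq> (fm ^^ Suc n) z"
proof
  assume e: "(fm ^^ n) (single q 1) = (fm ^^ Suc n) z"
  have sb: "single q 1 \<in> Bc" using single_Pc[OF q(1)] by (simp add: Pc_def)
  have "int ((fm ^^ n) (single q 1) q) = int ((fm ^^ Suc n) z q)" using e by simp
  then have e2: "(int q ^ n) mod int (q ^ q) = (int q ^ Suc n * int (z q)) mod int (q ^ q)"
    unfolding fm_pow[OF sb] fm_pow[OF z] int_nrm using q(1) by (simp add: single_def KK_def)
  have q1: "q > 1" using q(1) prime_gt_1_nat by blast
  have "q ^ n < q ^ q" using q1 q(2) by (intro power_strict_increasing) auto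
  then have "int q ^ n < int (q ^ q)" by (metis of_nat_less_iff of_nat_power)
  then have l: "(int q ^ n) mod int (q ^ q) = int q ^ n" by (simp add: mod_pos_pos_trivial)
  have "int q ^ Suc n dvd int q ^ q" using q(2) by (intro le_imp_power_dvd) simp
  then have "int q ^ Suc n dvd int (q ^ q)" by simp
  then have "int q ^ Suc n dvd (int q ^ Suc n * int (z q)) mod int (q ^ q)"
    by (intro dvd_mod) simp_all
  then have "int q ^ Suc n dvd int q ^ n" using e2 l by simp
  then have "int q ^ Suc n \<le> int q ^ n" using q1 by (intro zdvd_imp_le) simp_all
  moreover have "int q ^ n < int q ^ Suc n" using q1 by (intro power_strict_increasing) auto
  ultimately show False by simp
qed

lemma not_sch:
  assumes A: "A \<subseteq> Bc" "\<And>q. nat_prime q \<Longrightarrow> single q 1 \<in> A"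
  shows "(fm ^^ n) ` A \<noteq> (fm ^^ Suc n) ` A"
proof
  assume e: "(fm ^^ n) ` A = (fm ^^ Suc n) ` A"
  obtain q where q: "nat_prime q" "q > Suc n" using bigger_prime by blast
  have "(fm ^^ n) (single q 1) \<in> (fm ^^ Suc n) ` A" using e A(2)[OF q(1)] by blast
  then obtain z where z: "z \<in> A" "(fm ^^ n) (single q 1) = (fm ^^ Suc n) z" by blast
  then show False using key_neq[OF q, of z] A(1) by blast
qed

lemma not_sch_GG: "\<not> strongly_co_hopfian GG"
proof -
  have A1: "carrier GG \<subseteq> Bc" by (auto simp: carrier_GG)
  have A2: "\<And>q. nat_prime q \<Longrightarrow> single q 1 \<in> carrier GG" using single_Pc Pc_carrier by blast
  show ?thesis
  proof
    assume "strongly_co_hopfian GG"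
    then obtain n where "(fm ^^ n) ` carrier GG = (fm ^^ Suc n) ` carrier GG"
      using fm_hom unfolding strongly_co_hopfian_def by blast
    then show False using not_sch[OF A1 A2] by blast
  qed
qed

lemma not_sch_T: "\<not> strongly_co_hopfian (subgroup_generated GG TT)"
proof -
  have A1: "TT \<subseteq> Bc" by (auto simp: TT_def carrier_GG)
  have A2: "\<And>q. nat_prime q \<Longrightarrow> single q 1 \<in> TT" using single_Pc Pc_TT by blast
  show ?thesis
  proof
    assume "strongly_co_hopfian (subgroup_generated GG TT)"
    then obtain n where "(fm ^^ n) ` TT = (fm ^^ Suc n) ` TT"
      using fm_hom_T unfolding strongly_co_hopfian_def carrier_SGT by blast
    then show False using not_sch[OF A1 A2] by blast
  qed
qed

theorem mainTheorem17:
  shows "\<exists>G :: (nat \<Rightarrow> nat) monoid.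
     comm_group G \<and> sp_group G \<and>
     (\<forall>p. nat_prime p \<longrightarrow> finite (p_component G p)) \<and>
     has_tf_rank (G Mod torsion_part G) 1 \<and>
     strongly_co_hopfian (G Mod torsion_part G) \<and>
     \<not> strongly_co_hopfian (subgroup_generated G (torsion_part G)) \<and>
     \<not> strongly_co_hopfian G"
proof (intro exI[of _ GG] conjI allI impI)
  show "comm_group GG" by (rule comm_group_GG)
  show "sp_group GG" by (rule sp_GG)
  show "finite (p_component GG p)" if "nat_prime p" for p using that pcomp finite_Pc by simp
  show "has_tf_rank (GG Mod torsion_part GG) 1" unfolding torsion_TT by (rule Q_main(1))
  show "strongly_co_hopfian (GG Mod torsion_part GG)" unfolding torsion_TT by (rule Q_main(2))
  show "\<not> strongly_co_hopfian (subgroup_generated GG (torsion_part GG))" unfolding torsion_TT by (rule not_sch_T)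
  show "\<not> strongly_co_hopfian GG" by (rule not_sch_GG)
qed

end
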